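(* Let $V$ be a $\mathbb{Z}$-graded vertex algebra with $V=C_2(V)$. If a weak $V$-module $M$ is completely reducible, then $M=\widetilde{C}_2(M)$.
   Context: A $\mathbb{Z}$-graded vertex algebra is a vertex algebra $V=\bigoplus_{n\in\mathbb{Z}}V_n$ with a conformal vector $\omega\in V_2$ whose modes $L(n)$ (where $Y(\omega,z)=\sum_nL(n)z^{-n-2}$) satisfy the Virasoro relations, with $L(0)$ acting on $V_n$ as $n$ and $Y(L(-1)v,z)=\frac{d}{dz}Y(v,z)$. Modes: $Y(v,z)=\sum_n v_nz^{-n-1}$. $C_2(V)=\mathrm{Span}_{\mathbb{C}}\{u_{-2}v\mid u,v\in V\}$; for a weak $V$-module $M$, $\widetilde{C}_2(M)=\mathrm{Span}_{\mathbb{C}}\{u_{-2}w\mid u\in V,\ w\in M\}$. A weak $V$-module is completely reducible if it is a direct sum of finitely many irreducible weak $V$-modules (irreducible meaning no weak submodules other than $0$ and itself). *)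

theory Defs
  imports Complex_Main
begin

text \<open>Vector spaces over the complex numbers are given by a scalar multiplication
  s :: complex => 'a => 'a satisfying the axioms of the locale vector_space.
  Modes: Y u n v stands for u_n v, where Y(u,z) = sum_n u_n z^(-n-1).
  The whole type 'v is the vertex algebra V, the whole type 'm is the module M.\<close>

definition int_sign :: "int \<Rightarrow> complex" where
  "int_sign l = (if even l then 1 else -1)"

definition truncated :: "('v \<Rightarrow> int \<Rightarrow> 'm \<Rightarrow> 'm::zero) \<Rightarrow> bool" where
  "truncated YM \<longleftrightarrow> (\<forall>u w. \<exists>N. \<forall>n\<ge>N. YM u n w = 0)"

text \<open>By truncation only finitely many terms are nonzero; we require equality of the
  partial sums up to N for all sufficiently large N.\<close>
definition borcherds ::
  "(complex \<Rightarrow> 'm \<Rightarrow> 'm::ab_group_add) \<Rightarrow> ('v \<Rightarrow> int \<Rightarrow> 'v \<Rightarrow> 'v) \<Rightarrow> ('v \<Rightarrow> int \<Rightarrow> 'm \<Rightarrow> 'm) \<Rightarrow> bool" where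
  "borcherds sM Y YM \<longleftrightarrow>
     (\<forall>u v w l m n. \<exists>N0. \<forall>N\<ge>N0.
        (\<Sum>i<N. sM ((of_int m) gchoose i) (YM (Y u (l + int i) v) (m + n - int i) w)) =
        (\<Sum>i<N. sM ((-1) ^ i * ((of_int l) gchoose i))
            (YM u (l + m - int i) (YM v (n + int i) w)
             - sM (int_sign l) (YM v (l + n - int i) (YM u (m + int i) w)))))"

definition bilinear_modes ::
  "(complex \<Rightarrow> 'v \<Rightarrow> 'v::ab_group_add) \<Rightarrow> (complex \<Rightarrow> 'm \<Rightarrow> 'm::ab_group_add) \<Rightarrow> ('v \<Rightarrow> int \<Rightarrow> 'm \<Rightarrow> 'm) \<Rightarrow> bool" where
  "bilinear_modes sV sM YM \<longleftrightarrow>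
     (\<forall>u n. Vector_Spaces.linear sM sM (YM u n)) \<and>
     (\<forall>n w. Vector_Spaces.linear sV sM (\<lambda>u. YM u n w))"

definition vertex_algebra ::
  "(complex \<Rightarrow> 'v \<Rightarrow> 'v::ab_group_add) \<Rightarrow> ('v \<Rightarrow> int \<Rightarrow> 'v \<Rightarrow> 'v) \<Rightarrow> 'v \<Rightarrow> bool" where
  "vertex_algebra sV Y vac \<longleftrightarrow>
     vector_space sV \<and> bilinear_modes sV sV Y \<and> truncated Y \<and>
     (\<forall>n v. Y vac n v = (if n = -1 then v else 0)) \<and>
     (\<forall>u. Y u (-1) vac = u) \<and> (\<forall>u n. n \<ge> 0 \<longrightarrow> Y u n vac = 0) \<and>
     borcherds sV Y Y"

definition vir_L :: "('v \<Rightarrow> int \<Rightarrow> 'v \<Rightarrow> 'v) \<Rightarrow> 'v \<Rightarrow> int \<Rightarrow> 'v \<Rightarrow> 'v" where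
  "vir_L Y \<omega> n = Y \<omega> (n + 1)"

text \<open>Z-graded vertex algebra: V = direct sum of the subspaces Vg n (n in Z), with a
  conformal vector omega in Vg 2 whose modes L(n) satisfy the Virasoro relations (with some
  central charge c), L(0) acts on Vg n as n, and Y(L(-1)v,z) = d/dz Y(v,z), i.e.
  (L(-1)v)_n = -n v_{n-1}.\<close>
definition Z_graded_VA ::
  "(complex \<Rightarrow> 'v \<Rightarrow> 'v::ab_group_add) \<Rightarrow> ('v \<Rightarrow> int \<Rightarrow> 'v \<Rightarrow> 'v) \<Rightarrow> 'v \<Rightarrow> (int \<Rightarrow> 'v set) \<Rightarrow> 'v \<Rightarrow> bool" where
  "Z_graded_VA sV Y vac Vg \<omega> \<longleftrightarrow>
     vertex_algebra sV Y vac \<and>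
     (\<forall>n. module.subspace sV (Vg n)) \<and>
     (\<forall>v. \<exists>!f::int \<Rightarrow> 'v. finite {n. f n \<noteq> 0} \<and> (\<forall>n. f n \<in> Vg n) \<and> v = sum f {n. f n \<noteq> 0}) \<and>
     \<omega> \<in> Vg 2 \<and>
     (\<exists>c::complex. \<forall>m n v.
        vir_L Y \<omega> m (vir_L Y \<omega> n v) - vir_L Y \<omega> n (vir_L Y \<omega> m v) =
          sV (of_int (m - n)) (vir_L Y \<omega> (m + n) v) +
          (if m + n = 0 then sV ((of_int (m ^ 3 - m) / 12) * c) v else 0)) \<and>
     (\<forall>n. \<forall>v\<in>Vg n. vir_L Y \<omega> 0 v = sV (of_int n) v) \<and>
     (\<forall>v n x. Y (vir_L Y \<omega> (-1) v) n x = sV (- of_int n) (Y v (n - 1) x))"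

definition weak_module ::
  "(complex \<Rightarrow> 'v \<Rightarrow> 'v::ab_group_add) \<Rightarrow> ('v \<Rightarrow> int \<Rightarrow> 'v \<Rightarrow> 'v) \<Rightarrow> 'v \<Rightarrow>
   (complex \<Rightarrow> 'm \<Rightarrow> 'm::ab_group_add) \<Rightarrow> ('v \<Rightarrow> int \<Rightarrow> 'm \<Rightarrow> 'm) \<Rightarrow> bool" where
  "weak_module sV Y vac sM YM \<longleftrightarrow>
     vector_space sM \<and> bilinear_modes sV sM YM \<and> truncated YM \<and>
     (\<forall>n w. YM vac n w = (if n = -1 then w else 0)) \<and>
     borcherds sM Y YM"

definition weak_submodule ::
  "(complex \<Rightarrow> 'm \<Rightarrow> 'm::ab_group_add) \<Rightarrow> ('v \<Rightarrow> int \<Rightarrow> 'm \<Rightarrow> 'm) \<Rightarrow> 'm set \<Rightarrow> bool" where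
  "weak_submodule sM YM W \<longleftrightarrow>
     module.subspace sM W \<and> (\<forall>u n. \<forall>w\<in>W. YM u n w \<in> W)"

definition irreducible_submodule ::
  "(complex \<Rightarrow> 'm \<Rightarrow> 'm::ab_group_add) \<Rightarrow> ('v \<Rightarrow> int \<Rightarrow> 'm \<Rightarrow> 'm) \<Rightarrow> 'm set \<Rightarrow> bool" where
  "irreducible_submodule sM YM W \<longleftrightarrow>
     weak_submodule sM YM W \<and> W \<noteq> {0} \<and>
     (\<forall>U. weak_submodule sM YM U \<and> U \<subseteq> W \<longrightarrow> U = {0} \<or> U = W)"

definition completely_reducible ::
  "(complex \<Rightarrow> 'm \<Rightarrow> 'm::ab_group_add) \<Rightarrow> ('v \<Rightarrow> int \<Rightarrow> 'm \<Rightarrow> 'm) \<Rightarrow> bool" where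
  "completely_reducible sM YM \<longleftrightarrow>
     (\<exists>k::nat. \<exists>W::nat \<Rightarrow> 'm set.
        (\<forall>i<k. irreducible_submodule sM YM (W i)) \<and>
        (\<forall>x. \<exists>!f::nat \<Rightarrow> 'm. (\<forall>i<k. f i \<in> W i) \<and> (\<forall>i\<ge>k. f i = 0) \<and> x = (\<Sum>i<k. f i)))"

definition C2 :: "(complex \<Rightarrow> 'v \<Rightarrow> 'v::ab_group_add) \<Rightarrow> ('v \<Rightarrow> int \<Rightarrow> 'v \<Rightarrow> 'v) \<Rightarrow> 'v set" where
  "C2 sV Y = module.span sV {Y u (-2) v | u v. True}"

definition C2_tilde ::
  "(complex \<Rightarrow> 'm \<Rightarrow> 'm::ab_group_add) \<Rightarrow> ('v \<Rightarrow> int \<Rightarrow> 'm \<Rightarrow> 'm) \<Rightarrow> 'm set" where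
  "C2_tilde sM YM = module.span sM {YM u (-2) w | u w. True}"

end

theory Submission
  imports Defs
begin

lemma lhs0:
  assumes "vector_space sM" "0 < N"
  shows "(\<Sum>i<N. sM ((of_int 0::complex) gchoose i) (g i)) = (g 0 :: 'm::ab_group_add)"
proof -
  interpret M: vector_space sM by fact
  have "(\<Sum>i<N. sM ((of_int 0::complex) gchoose i) (g i)) = (\<Sum>i\<in>{0}. sM ((of_int 0::complex) gchoose i) (g i))"
    by (rule sum.mono_neutral_right) (use assms(2) in \<open>auto simp: gbinomial_0_left\<close>)
  then show ?thesis by simp
qed

lemma key:
  assumes wm: "weak_module sV Y vac sM YM"
  shows "YM u (- int (j+2)) w \<in> C2_tilde sM YM"
  using wm
proof (induction j arbitrary: u w)
  case 0
  have "vector_space sM" using wm unfolding weak_module_def by auto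
  then interpret M: vector_space sM .
  show ?case unfolding C2_tilde_def by (rule M.span_base) force
next
  case (Suc j)
  have vs: "vector_space sM" using wm unfolding weak_module_def by auto
  then interpret M: vector_space sM .
  have lin: "\<And>u n. Vector_Spaces.linear sM sM (YM u n)" using wm unfolding weak_module_def bilinear_modes_def by auto
  have z: "YM u n 0 = 0" for u n
  proof -
    interpret L: Vector_Spaces.linear sM sM "YM u n" by (rule lin)
    show ?thesis by (rule L.zero)
  qed
  have vacm: "\<And>n w. YM vac n w = (if n = -1 then w else 0)" using wm unfolding weak_module_def by auto
  have bo: "borcherds sM Y YM" using wm unfolding weak_module_def by auto
  obtain N0 where B: "\<And>N. N \<ge> N0 \<Longrightarrow>
        (\<Sum>i<N. sM ((of_int 0) gchoose i) (YM (Y u (-2 + int i) vac) (0 + (- int (j+2)) - int i) w)) =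
        (\<Sum>i<N. sM ((-1) ^ i * ((of_int (-2)) gchoose i))
            (YM u (-2 + 0 - int i) (YM vac (- int (j+2) + int i) w)
             - sM (int_sign (-2)) (YM vac (-2 + (- int (j+2)) - int i) (YM u (0 + int i) w))))"
    using bo[unfolded borcherds_def, rule_format, where u=u and v=vac and w=w and l="-2" and m=0 and n="- int (j+2)"] by blast
  define N where "N = max N0 (j+3)"
  have NN0: "N0 \<le> N" unfolding N_def by simp
  note BN = B[OF NN0]
  have NN: "j + 1 < N" unfolding N_def by auto
  define c :: complex where "c = (-1) ^ (j+1) * ((of_int (-2)) gchoose (j+1))"
  have lhs: "(\<Sum>i<N. sM ((of_int 0) gchoose i) (YM (Y u (-2 + int i) vac) (0 + (- int (j+2)) - int i) w))
     = YM (Y u (-2) vac) (- int (j+2)) w"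
    using lhs0[OF vs, of N] NN by simp
  have "(\<Sum>i<N. sM ((-1) ^ i * ((of_int (-2)) gchoose i))
            (YM u (-2 + 0 - int i) (YM vac (- int (j+2) + int i) w)
             - sM (int_sign (-2)) (YM vac (-2 + (- int (j+2)) - int i) (YM u (0 + int i) w))))
      = (\<Sum>i\<in>{j+1}. sM ((-1) ^ i * ((of_int (-2)) gchoose i))
            (YM u (-2 + 0 - int i) (YM vac (- int (j+2) + int i) w)
             - sM (int_sign (-2)) (YM vac (-2 + (- int (j+2)) - int i) (YM u (0 + int i) w))))"
    by (rule sum.mono_neutral_right) (use NN in \<open>auto simp: vacm z\<close>)
  also have "\<dots> = sM c (YM u (- int (Suc j + 2)) w)"
    by (simp add: vacm c_def algebra_simps)
  finally have eq: "YM (Y u (-2) vac) (- int (j+2)) w = sM c (YM u (- int (Suc j + 2)) w)"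
    using BN lhs by simp
  have gb: "(2 + of_nat j :: complex) gchoose Suc j = 2 + of_nat j"
  proof -
    have "(of_nat (Suc (Suc j)) :: complex) gchoose Suc j = of_nat (Suc (Suc j) choose Suc j)"
      by (simp only: binomial_gbinomial)
    also have "Suc (Suc j) choose Suc j = Suc (Suc j)"
      by (metis binomial_symmetric binomial_1 Suc_n_not_le_n nat_le_linear diff_Suc_Suc diff_Suc_1 le_Suc_eq binomial_Suc_n)
    finally show ?thesis by simp
  qed
  have "c = of_nat (j+2)"
    using gb unfolding c_def using gbinomial_minus[of "2::complex" "j+1"]
    by (simp add: binomial_gbinomial[symmetric])
  then have cnz: "c \<noteq> 0" using of_nat_eq_0_iff[of "j+2", where 'a=complex] by simp
  have "sM c (YM u (- int (Suc j + 2)) w) \<in> C2_tilde sM YM"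
    using Suc.IH[OF wm, of "Y u (-2) vac" w] eq by simp
  then have "sM (inverse c) (sM c (YM u (- int (Suc j + 2)) w)) \<in> C2_tilde sM YM"
    unfolding C2_tilde_def by (rule M.span_scale)
  then show ?case using cnz by (simp add: M.scale_scale)
qed


lemma gen_in:
  assumes wm: "weak_module sV Y vac sM YM"
  shows "YM (Y a (-2) b) (-1) w \<in> C2_tilde sM YM"
proof -
  have vs: "vector_space sM" using wm unfolding weak_module_def by auto
  then interpret M: vector_space sM .
  have bo: "borcherds sM Y YM" using wm unfolding weak_module_def by auto
  obtain N0 where B: "\<And>N. N \<ge> N0 \<Longrightarrow>
        (\<Sum>i<N. sM ((of_int 0) gchoose i) (YM (Y a (-2 + int i) b) (0 + (- 1) - int i) w)) =
        (\<Sum>i<N. sM ((-1) ^ i * ((of_int (-2)) gchoose i))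
            (YM a (-2 + 0 - int i) (YM b (- 1 + int i) w)
             - sM (int_sign (-2)) (YM b (-2 + (- 1) - int i) (YM a (0 + int i) w))))"
    using bo[unfolded borcherds_def, rule_format, where u=a and v=b and w=w and l="-2" and m=0 and n="- 1"] by blast
  define N where "N = max N0 1"
  have NN0: "N0 \<le> N" unfolding N_def by simp
  have NN: "0 < N" unfolding N_def by simp
  have lhs: "(\<Sum>i<N. sM ((of_int 0) gchoose i) (YM (Y a (-2 + int i) b) (0 + (- 1) - int i) w))
     = YM (Y a (-2) b) (- 1) w"
    using lhs0[OF vs, of N] NN by simp
  have k1: "YM a (-2 + 0 - int i) x \<in> C2_tilde sM YM" for i x
  proof -
    have e: "-2 + 0 - int i = - int (i+2)" by simp
    show ?thesis unfolding e by (rule key[OF wm])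
  qed
  have k2: "YM b (-2 + (- 1) - int i) x \<in> C2_tilde sM YM" for i x
  proof -
    have e: "-2 + (- 1) - int i = - int ((i+1)+2)" by simp
    show ?thesis unfolding e by (rule key[OF wm])
  qed
  have "(\<Sum>i<N. sM ((-1) ^ i * ((of_int (-2)) gchoose i))
            (YM a (-2 + 0 - int i) (YM b (- 1 + int i) w)
             - sM (int_sign (-2)) (YM b (-2 + (- 1) - int i) (YM a (0 + int i) w)))) \<in> C2_tilde sM YM"
    unfolding C2_tilde_def
    by (intro M.span_sum M.span_scale M.span_diff k1[unfolded C2_tilde_def] k2[unfolded C2_tilde_def])
  then show ?thesis using B[OF NN0] lhs by simp
qed

theorem corollary2p14:
  fixes sV :: "complex \<Rightarrow> 'v::ab_group_add \<Rightarrow> 'v"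
    and Y :: "'v \<Rightarrow> int \<Rightarrow> 'v \<Rightarrow> 'v"
    and vac :: 'v and \<omega> :: 'v and Vg :: "int \<Rightarrow> 'v set"
    and sM :: "complex \<Rightarrow> 'm::ab_group_add \<Rightarrow> 'm"
    and YM :: "'v \<Rightarrow> int \<Rightarrow> 'm \<Rightarrow> 'm"
  assumes "Z_graded_VA sV Y vac Vg \<omega>"
    and "C2 sV Y = UNIV"
    and "weak_module sV Y vac sM YM"
    and "completely_reducible sM YM"
  shows "C2_tilde sM YM = UNIV"
proof -
  have vs: "vector_space sM" using assms(3) unfolding weak_module_def by auto
  then interpret M: vector_space sM .
  have "w \<in> C2_tilde sM YM" for w
  proof -
    have lin: "Vector_Spaces.linear sV sM (\<lambda>u. YM u (-1) w)"
      using assms(3) unfolding weak_module_def bilinear_modes_def by auto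
    interpret L: Vector_Spaces.linear sV sM "\<lambda>u. YM u (-1) w" by (rule lin)
    let ?G = "{Y u (-2) v | u v. True}"
    have "vac \<in> module.span sV ?G" using assms(2) unfolding C2_def by simp
    then have "YM vac (-1) w \<in> module.span sM ((\<lambda>u. YM u (-1) w) ` ?G)"
      using L.span_image by blast
    moreover have "module.span sM ((\<lambda>u. YM u (-1) w) ` ?G) \<subseteq> C2_tilde sM YM"
    proof -
      have "(\<lambda>u. YM u (-1) w) ` ?G \<subseteq> C2_tilde sM YM"
        using gen_in[OF assms(3)] by blast
      then show ?thesis unfolding C2_tilde_def
        using M.span_minimal M.subspace_span by blast
    qed
    moreover have "YM vac (-1) w = w" using assms(3) unfolding weak_module_def by auto
    ultimately show ?thesis by auto
  qed
  then show ?thesis by auto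
qed

end
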